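(* Let $q$ be a prime power and $n\ge1$ with $q^n>2$. Let $\beta,\gamma\in\mathbb{F}_q$ with $\beta\neq-\gamma$, and let $f(x)\neq x-1$ be a primitive polynomial of degree $n$ over $\mathbb{F}_q$. Set $h(x)=f\big((\beta+\gamma)x+1\big)$ and $h^*(x)=x^n h(1/x)$. Then the polynomial $$F(x)=\frac{(x-\gamma)^n\, f\!\left(\dfrac{x^{q^n}+\beta}{x-\gamma}\right)}{h^*(x-\gamma)}$$ is an irreducible polynomial of degree $n(q^n-1)$ over $\mathbb{F}_q$.
   Context: A primitive polynomial of degree $n$ over $\mathbb{F}_q$ is a monic irreducible polynomial of degree $n$ whose roots generate the multiplicative group $\mathbb{F}_{q^n}^*$. *)

theory Defs
  imports "HOL-Computational_Algebra.Computational_Algebra"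
begin

text \<open>The base field F_q is a finite field type 'a, with q = card (UNIV :: 'a set).
  F_{q^n} is realised as F_q[x]/(f); the class of x there is a root of f.
  So f is primitive of degree n iff f is monic irreducible of degree n and
  the root x mod f has multiplicative order q^n - 1, i.e. f divides
  x^(q^n-1) - 1 but no x^k - 1 with 0 < k < q^n - 1.\<close>

definition primitive_poly :: "nat \<Rightarrow> 'a::{field,finite} poly \<Rightarrow> bool" where
  "primitive_poly n f \<longleftrightarrow>
     degree f = n \<and> lead_coeff f = 1 \<and> irreducible f \<and>
     f dvd (monom 1 (card (UNIV :: 'a set)^n - 1) - 1) \<and>
     (\<forall>k. 0 < k \<and> k < card (UNIV :: 'a set)^n - 1 \<longrightarrow> \<not> f dvd (monom 1 k - 1))"

text \<open>(x-\<gamma>)^n f((x^(q^n)+\<beta>)/(x-\<gamma>)) written as a polynomial.\<close>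
definition hom_num :: "nat \<Rightarrow> 'a::{field,finite} \<Rightarrow> 'a \<Rightarrow> 'a poly \<Rightarrow> 'a poly" where
  "hom_num n \<beta> \<gamma> f =
     (\<Sum>i\<le>n. smult (coeff f i) ((monom 1 (card (UNIV :: 'a set)^n) + [:\<beta>:]) ^ i * [:-\<gamma>, 1:] ^ (n - i)))"

definition h_poly :: "'a::{field,finite} \<Rightarrow> 'a \<Rightarrow> 'a poly \<Rightarrow> 'a poly" where
  "h_poly \<beta> \<gamma> f = pcompose f [:1, \<beta> + \<gamma>:]"

text \<open>h*(x) = x^n h(1/x)\<close>
definition h_star :: "nat \<Rightarrow> 'a::{field,finite} \<Rightarrow> 'a \<Rightarrow> 'a poly \<Rightarrow> 'a poly" where
  "h_star n \<beta> \<gamma> f = (\<Sum>i\<le>n. monom (coeff (h_poly \<beta> \<gamma> f) i) (n - i))"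

definition den_poly :: "nat \<Rightarrow> 'a::{field,finite} \<Rightarrow> 'a \<Rightarrow> 'a poly \<Rightarrow> 'a poly" where
  "den_poly n \<beta> \<gamma> f = pcompose (h_star n \<beta> \<gamma> f) [:-\<gamma>, 1:]"

end

theory Submission
  imports Defs "HOL-Algebra.Algebraic_Closure_Type"
begin


hide_const (open) module.smult Polynomials.degree Polynomials.lead_coeff up_ring.monom up_ring.coeff Divisibility.irreducible Divisibility.prime

lemma fermat_a:
  fixes x :: "'a :: {field,finite}"
  shows "x ^ card (UNIV :: 'a set) = x"
proof (cases "x = 0")
  case False
  have "x * (\<Prod>y\<in>UNIV-{0}. x * y) = x * x ^ (card (UNIV :: 'a set) - 1) * \<Prod>(UNIV-{0})"
    by (simp add: prod.distrib mult_ac)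
  also have "x * x ^ (card (UNIV :: 'a set) - 1) = x ^ Suc (card (UNIV :: 'a set) - 1)"
    by (subst power_Suc) auto
  also have "Suc (card (UNIV :: 'a set) - 1) = card (UNIV :: 'a set)"
    using finite_UNIV_card_ge_0[where ?'a = 'a] by simp
  also have "(\<Prod>y\<in>UNIV-{0}. x * y) = (\<Prod>y\<in>UNIV-{0}. y)"
    by (rule prod.reindex_bij_witness[of _ "\<lambda>y. y / x" "\<lambda>y. x * y"]) (use False in auto)
  finally show ?thesis
    by simp
qed (use finite_UNIV_card_ge_0[where ?'a = 'a] in auto)

lemma fermat_a_pow:
  fixes x :: "'a :: {field,finite}"
  shows "x ^ (card (UNIV :: 'a set) ^ j) = x"
  by (induction j) (simp_all add: fermat_a power_mult)

lemma card_ge2: "card (UNIV :: 'a :: {field,finite} set) \<ge> 2"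
proof -
  have "{0, 1} \<subseteq> (UNIV :: 'a set)" by auto
  hence "card {0, 1::'a} \<le> card (UNIV :: 'a set)" by (intro card_mono) auto
  thus ?thesis by simp
qed

lemma of_nat_card_a: "of_nat (card (UNIV :: 'a :: {field,finite} set)) = (0::'a)"
proof -
  have "(\<Sum>x\<in>(UNIV::'a set). x + 1) = (\<Sum>x\<in>UNIV. x)"
    by (rule sum.reindex_bij_witness[of _ "\<lambda>y. y - 1" "\<lambda>y. y + 1"]) auto
  moreover have "(\<Sum>x\<in>(UNIV::'a set). x + 1) = (\<Sum>x\<in>UNIV. x) + of_nat (card (UNIV :: 'a set))"
    by (simp add: sum.distrib)
  ultimately show ?thesis by simp
qed

lemma binom_zero_a:
  assumes "0 < k" "k < card (UNIV :: 'a :: {field,finite} set)"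
  shows "of_nat (card (UNIV :: 'a set) choose k) = (0::'a)"
proof -
  define q where "q = card (UNIV :: 'a set)"
  have q2: "q \<ge> 2" using card_ge2 q_def by auto
  define P :: "'a poly" where "P = [:1,1:]^q - monom 1 q - 1"
  have roots: "poly P a = 0" for a
    by (simp add: P_def poly_monom q_def fermat_a add.commute)
  have degle: "degree P < q"
  proof -
    have d1: "degree ([:1,1:]^q - monom (1::'a) q) \<le> q"
      by (rule degree_diff_le) (simp_all add: degree_power_le degree_monom_le order.trans[OF degree_power_le])
    have "coeff ([:1,1:]^q - monom (1::'a) q) q = 0"
      using coeff_linear_power[of "1::'a" q] by simp
    hence "degree ([:1,1:]^q - monom (1::'a) q) \<noteq> q \<or> [:1,1:]^q - monom (1::'a) q = 0"
      by (metis leading_coeff_0_iff)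
    hence "degree ([:1,1:]^q - monom (1::'a) q) < q" using d1 q2 by fastforce
    moreover have "degree P \<le> max (degree ([:1,1:]^q - monom (1::'a) q)) (degree (1::'a poly))"
      unfolding P_def by (rule degree_diff_le_max)
    ultimately show ?thesis using q2 by simp
  qed
  have "P = 0"
  proof (rule ccontr)
    assume "P \<noteq> 0"
    hence "card {x. poly P x = 0} \<le> degree P" by (rule card_poly_roots_bound)
    moreover have "{x. poly P x = 0} = UNIV" using roots by auto
    ultimately show False using degle q_def by simp
  qed
  hence "coeff P k = 0" by simp
  moreover have "coeff P k = coeff ([:1,1:]^q) k" using assms q_def by (simp add: P_def coeff_monom)
  moreover have "coeff ([:1,1::'a:]^q) k = of_nat (q choose k)"
    using assms q_def by (simp add: coeff_linear_poly_power)
  ultimately show ?thesis using q_def by simp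
qed




lemma frob_gen:
  fixes x y :: "'b::comm_ring_1"
  assumes z: "\<And>k. 0 < k \<Longrightarrow> k < m \<Longrightarrow> of_nat (m choose k) = (0::'b)" and m: "m > 0"
  shows "(x + y) ^ m = x ^ m + y ^ m"
proof -
  have "(x + y) ^ m = (\<Sum>k\<le>m. of_nat (m choose k) * x ^ k * y ^ (m - k))"
    by (rule binomial_ring)
  also have "\<dots> = (\<Sum>k\<in>{0,m}. of_nat (m choose k) * x ^ k * y ^ (m - k))"
  proof (intro sum.mono_neutral_right ballI)
    fix k assume "k \<in> {..m} - {0, m}"
    hence k: "k > 0" "k < m" by auto
    thus "of_nat (m choose k) * x ^ k * y ^ (m - k) = 0" using z[OF k] by simp
  qed auto
  finally show ?thesis using m by (simp add: add_ac)
qed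

definition frob_ok :: "nat \<Rightarrow> 'b::comm_ring_1 itself \<Rightarrow> bool" where
  "frob_ok m T \<longleftrightarrow> (\<forall>x y :: 'b. (x + y) ^ m = x ^ m + y ^ m)"

lemma frob_ok_pow:
  assumes "frob_ok m TYPE('b::comm_ring_1)"
  shows "frob_ok (m ^ j) TYPE('b)"
  using assms unfolding frob_ok_def
proof (induction j)
  case (Suc j)
  show ?case
  proof (intro allI)
    fix x y :: 'b
    have "(x + y) ^ (m ^ Suc j) = ((x + y) ^ (m ^ j)) ^ m"
      by (simp add: power_mult[symmetric] mult.commute)
    also have "\<dots> = (x ^ (m^j) + y ^ (m^j)) ^ m" using Suc by simp
    also have "\<dots> = (x ^ (m^j)) ^ m + (y ^ (m^j)) ^ m" using Suc.prems by blast
    also have "\<dots> = x ^ (m ^ Suc j) + y ^ (m ^ Suc j)"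
      by (simp add: power_mult[symmetric] mult.commute)
    finally show "(x + y) ^ (m ^ Suc j) = x ^ (m ^ Suc j) + y ^ (m ^ Suc j)" .
  qed
qed simp

lemma frob_ok_poly: "frob_ok (card (UNIV :: 'a::{field,finite} set)) TYPE('a poly)"
  unfolding frob_ok_def
proof (intro allI)
  fix x y :: "'a poly"
  show "(x + y) ^ card (UNIV :: 'a set) = x ^ card (UNIV :: 'a set) + y ^ card (UNIV :: 'a set)"
    by (rule frob_gen) (use binom_zero_a card_ge2[where 'a='a] in \<open>auto simp: of_nat_poly\<close>)
qed

lemma frob_ok_ac: "frob_ok (card (UNIV :: 'a::{field,finite} set)) TYPE('a alg_closure)"
  unfolding frob_ok_def
proof (intro allI)
  fix x y :: "'a alg_closure"
  show "(x + y) ^ card (UNIV :: 'a set) = x ^ card (UNIV :: 'a set) + y ^ card (UNIV :: 'a set)"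
  proof (rule frob_gen)
    fix k assume "0 < k" "k < card (UNIV :: 'a set)"
    hence "of_nat (card (UNIV :: 'a set) choose k) = (0::'a)" by (rule binom_zero_a)
    hence "to_ac (of_nat (card (UNIV :: 'a set) choose k) :: 'a) = 0" by simp
    thus "of_nat (card (UNIV :: 'a set) choose k) = (0::'a alg_closure)" by simp
  qed (use card_ge2[where 'a='a] in auto)
qed

lemma frob_add:
  assumes "frob_ok m TYPE('b::comm_ring_1)"
  shows "((x::'b) + y) ^ m = x ^ m + y ^ m"
  using assms unfolding frob_ok_def by blast

lemma frob_diff:
  assumes "frob_ok m TYPE('b::comm_ring_1)"
  shows "((x::'b) - y) ^ m = x ^ m - y ^ m"
proof -
  have "((x - y) + y) ^ m = (x - y) ^ m + y ^ m" by (rule frob_add[OF assms])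
  thus ?thesis by (simp add: algebra_simps)
qed

lemma frob_sum:
  assumes "frob_ok m TYPE('b::comm_ring_1)" "m > 0"
  shows "(\<Sum>i\<in>A. (f i :: 'b)) ^ m = (\<Sum>i\<in>A. f i ^ m)"
  using assms
  by (induction A rule: infinite_finite_induct) (auto simp: frob_add power_0_left)

lemma frob_inj:
  fixes x y :: "'b::idom"
  assumes "frob_ok m TYPE('b)" "m > 0" "x ^ m = y ^ m"
  shows "x = y"
proof -
  have "(x - y) ^ m = 0" using frob_diff[OF assms(1)] assms(3) by simp
  thus ?thesis using assms(2) by simp
qed


lemma to_ac_pow_card: "(to_ac (c::'a::{field,finite})) ^ (card (UNIV :: 'a set) ^ j) = to_ac c"
  by (metis to_ac_power fermat_a_pow)




definition Hm :: "nat \<Rightarrow> 'b::comm_ring_1 poly \<Rightarrow> 'b poly \<Rightarrow> 'b poly \<Rightarrow> 'b poly" where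
  "Hm m p u v = (\<Sum>i\<le>m. smult (coeff p i) (u ^ i * v ^ (m - i)))"

lemma Hm_0p [simp]: "Hm m 0 u v = 0"
  by (simp add: Hm_def)

lemma Hm_add: "Hm m (p + r) u v = Hm m p u v + Hm m r u v"
  by (simp add: Hm_def smult_add_left sum.distrib)

lemma smult_sum_right: "smult c (\<Sum>i\<in>A. f i) = (\<Sum>i\<in>A. smult c (f i))"
  by (induction A rule: infinite_finite_induct) (simp_all add: smult_add_right)

lemma Hm_smult: "Hm m (smult c p) u v = smult c (Hm m p u v)"
  by (simp add: Hm_def smult_sum_right mult.assoc)

lemma Hm_minus: "Hm m (- p) u v = - Hm m p u v"
  by (simp add: Hm_def sum_negf)

lemma Hm_diff: "Hm m (p - r) u v = Hm m p u v - Hm m r u v"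
  using Hm_add[of m p "-r" u v] Hm_minus[of m r u v] by simp

lemma Hm_sum: "Hm m (\<Sum>j\<in>A. p j) u v = (\<Sum>j\<in>A. Hm m (p j) u v)"
  by (induction A rule: infinite_finite_induct) (simp_all add: Hm_add)

lemma Hm_pCons: "Hm (Suc m) (pCons a p) u v = smult a (v ^ Suc m) + u * Hm m p u v"
proof -
  have "Hm (Suc m) (pCons a p) u v =
     smult (coeff (pCons a p) 0) (u ^ 0 * v ^ (Suc m - 0)) +
     (\<Sum>i\<le>m. smult (coeff (pCons a p) (Suc i)) (u ^ Suc i * v ^ (Suc m - Suc i)))"
    unfolding Hm_def by (rule sum.atMost_Suc_shift)
  also have "(\<Sum>i\<le>m. smult (coeff (pCons a p) (Suc i)) (u ^ Suc i * v ^ (Suc m - Suc i)))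
       = u * Hm m p u v"
    by (simp add: Hm_def sum_distrib_left mult_ac)
  finally show ?thesis by simp
qed

lemma Hm_zero_m: "Hm 0 p u v = [:coeff p 0:]"
  by (simp add: Hm_def)

lemma Hm_Suc_deg:
  assumes "degree p \<le> m"
  shows "Hm (Suc m) p u v = v * Hm m p u v"
proof -
  have "coeff p (Suc m) = 0" using assms by (simp add: coeff_eq_0)
  hence "Hm (Suc m) p u v = (\<Sum>i\<le>m. smult (coeff p i) (u ^ i * v ^ (Suc m - i)))"
    by (simp add: Hm_def)
  also have "\<dots> = (\<Sum>i\<le>m. v * smult (coeff p i) (u ^ i * v ^ (m - i)))"
    by (intro sum.cong refl) (simp add: Suc_diff_le mult_ac)
  finally show ?thesis by (simp add: Hm_def sum_distrib_left)
qed

lemma Hm_shift: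
  assumes "degree p \<le> m"
  shows "Hm (k + m) p u v = v ^ k * Hm m p u v"
proof (induction k)
  case (Suc k)
  have "Hm (Suc k + m) p u v = Hm (Suc (k + m)) p u v" by simp
  also have "\<dots> = v * Hm (k + m) p u v" by (rule Hm_Suc_deg) (use assms in simp)
  finally show ?case using Suc by simp
qed simp

lemma Hm_mult:
  assumes "degree p \<le> m1" "degree r \<le> m2"
  shows "Hm (m1 + m2) (p * r) u v = Hm m1 p u v * Hm m2 r u v"
  using assms(1)
proof (induction p arbitrary: m1 rule: pCons_induct)
  case (pCons a p)
  show ?case
  proof (cases m1)
    case 0
    hence "pCons a p = [:a:]" using pCons.prems
      by (cases "p = 0") (auto simp: degree_pCons_eq_if)
    thus ?thesis using 0 by (simp add: Hm_smult Hm_zero_m)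
  next
    case (Suc m1')
    have dp: "degree p \<le> m1'" using pCons.prems Suc
      by (cases "p = 0") (auto simp: degree_pCons_eq_if)
    have e0: "pCons a p * r = smult a r + pCons 0 (p * r)" by simp
    have e1: "Hm (m1 + m2) (smult a r) u v = smult a (v ^ m1 * Hm m2 r u v)"
      unfolding Hm_smult using Hm_shift[OF assms(2), of m1 u v] by simp
    have e2: "Hm (m1 + m2) (pCons 0 (p * r)) u v = u * Hm (m1' + m2) (p * r) u v"
      using Suc Hm_pCons[of "m1' + m2" 0 "p * r" u v] by simp
    have e3: "Hm (m1' + m2) (p * r) u v = Hm m1' p u v * Hm m2 r u v"
      by (rule pCons.IH[OF dp])
    have e4: "Hm m1 (pCons a p) u v = smult a (v ^ m1) + u * Hm m1' p u v"
      using Suc Hm_pCons[of m1' a p u v] by simp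
    have "Hm (m1 + m2) (pCons a p * r) u v = Hm (m1 + m2) (smult a r) u v + Hm (m1 + m2) (pCons 0 (p * r)) u v"
      unfolding e0 by (rule Hm_add)
    also have "\<dots> = smult a (v ^ m1 * Hm m2 r u v) + u * (Hm m1' p u v * Hm m2 r u v)"
      unfolding e1 e2 e3 ..
    also have "\<dots> = Hm m1 (pCons a p) u v * Hm m2 r u v"
      unfolding e4 by (simp add: distrib_right mult.assoc)
    finally show ?thesis .
  qed
qed simp

lemma Hm_monom:
  assumes "k \<le> m"
  shows "Hm m (monom c k) u v = smult c (u ^ k * v ^ (m - k))"
proof -
  have "Hm m (monom c k) u v = (\<Sum>i\<le>m. if i = k then smult c (u ^ k * v ^ (m - k)) else 0)"
    unfolding Hm_def by (intro sum.cong refl) (simp add: coeff_monom)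
  also have "\<dots> = smult c (u ^ k * v ^ (m - k))" using assms by simp
  finally show ?thesis .
qed

lemma Hm_pow:
  assumes "degree r \<le> 1"
  shows "Hm i (r ^ i) u v = (Hm 1 r u v) ^ i"
proof (induction i)
  case 0
  show ?case by (simp add: Hm_zero_m)
next
  case (Suc i)
  have "Hm (1 + i) (r * r ^ i) u v = Hm 1 r u v * Hm i (r ^ i) u v"
    by (rule Hm_mult) (use assms in \<open>simp_all add: degree_power_le order.trans[OF degree_power_le]\<close>)
  thus ?case using Suc by simp
qed

lemma pcompose_power': "pcompose (p ^ k) r = (pcompose p r) ^ k"
  for p r :: "'b::comm_semiring_1 poly"
  by (induction k) (simp_all add: pcompose_1 pcompose_mult)

lemma Hm_pcompose: "pcompose (Hm m p u v) s = Hm m p (pcompose u s) (pcompose v s)"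
  by (simp add: Hm_def pcompose_sum pcompose_smult pcompose_mult pcompose_power')

lemma pcompose_expand:
  assumes "degree f \<le> m"
  shows "pcompose f r = (\<Sum>i\<le>m. smult (coeff f i) (r ^ i))"
  using assms
proof (induction f arbitrary: m rule: pCons_induct)
  case (pCons a p)
  show ?case
  proof (cases m)
    case 0
    hence "pCons a p = [:a:]" using pCons.prems
      by (cases "p = 0") (auto simp: degree_pCons_eq_if)
    thus ?thesis using 0 by (simp add: pcompose_pCons)
  next
    case (Suc m')
    have dp: "degree p \<le> m'" using pCons.prems Suc
      by (cases "p = 0") (auto simp: degree_pCons_eq_if)
    have "pcompose (pCons a p) r = [:a:] + r * pcompose p r" by (rule pcompose_pCons)
    also have "\<dots> = [:a:] + r * (\<Sum>i\<le>m'. smult (coeff p i) (r ^ i))" using pCons.IH[OF dp] by simp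
    also have "\<dots> = (\<Sum>i\<le>m. smult (coeff (pCons a p) i) (r ^ i))"
      unfolding Suc sum.atMost_Suc_shift
      by (simp add: sum_distrib_left mult_ac smult_conv_map_poly[symmetric])
    finally show ?thesis .
  qed
qed simp

lemma Hm_comp:
  assumes "degree f \<le> m" "degree r \<le> 1"
  shows "Hm m (pcompose f r) u v = Hm m f (Hm 1 r u v) v"
proof -
  have "Hm m (pcompose f r) u v = (\<Sum>i\<le>m. smult (coeff f i) (Hm m (r ^ i) u v))"
    by (simp add: pcompose_expand[OF assms(1)] Hm_sum Hm_smult)
  also have "\<dots> = (\<Sum>i\<le>m. smult (coeff f i) ((Hm 1 r u v) ^ i * v ^ (m - i)))"
  proof (intro sum.cong refl)
    fix i assume "i \<in> {..m}"
    hence "Hm m (r ^ i) u v = Hm ((m - i) + i) (r ^ i) u v" by simp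
    also have "\<dots> = v ^ (m - i) * Hm i (r ^ i) u v"
      by (rule Hm_shift) (use assms(2) in \<open>simp add: degree_power_le order.trans[OF degree_power_le]\<close>)
    finally show "smult (coeff f i) (Hm m (r ^ i) u v) = smult (coeff f i) ((Hm 1 r u v) ^ i * v ^ (m - i))"
      by (simp add: Hm_pow[OF assms(2)] mult.commute)
  qed
  finally show ?thesis by (simp add: Hm_def)
qed




definition ev :: "'a::field poly \<Rightarrow> 'a alg_closure \<Rightarrow> 'a alg_closure" where
  "ev p x = poly (map_poly to_ac p) x"

lemma ev_pCons [simp]: "ev (pCons a p) x = to_ac a + x * ev p x"
  by (simp add: ev_def map_poly_pCons)

lemma ev_0 [simp]: "ev 0 x = 0"
  by (simp add: ev_def)

lemma ev_add [simp]: "ev (p + r) x = ev p x + ev r x"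
  by (induction p r rule: poly_induct2) (simp_all add: algebra_simps)

lemma ev_smult [simp]: "ev (smult c p) x = to_ac c * ev p x"
  by (induction p) (simp_all add: algebra_simps)

lemma ev_minus [simp]: "ev (- p) x = - ev p x"
  by (induction p) (simp_all add: algebra_simps)

lemma ev_diff [simp]: "ev (p - r) x = ev p x - ev r x"
  using ev_add[of p "-r" x] by simp

lemma ev_mult [simp]: "ev (p * r) x = ev p x * ev r x"
  by (induction p) (simp_all add: algebra_simps)

lemma ev_1 [simp]: "ev 1 x = 1"
  by (simp add: one_pCons)

lemma ev_power [simp]: "ev (p ^ k) x = ev p x ^ k"
  by (induction k) simp_all

lemma ev_sum [simp]: "ev (\<Sum>i\<in>A. p i) x = (\<Sum>i\<in>A. ev (p i) x)"
  by (induction A rule: infinite_finite_induct) simp_all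

lemma ev_monom [simp]: "ev (monom c k) x = to_ac c * x ^ k"
  by (simp add: ev_def map_poly_monom poly_monom)

lemma degree_map_ac [simp]: "degree (map_poly (to_ac :: 'a::field \<Rightarrow> _) p) = degree p"
  by (rule degree_map_poly) simp

lemma ev_altdef:
  assumes "degree p \<le> m"
  shows "ev p x = (\<Sum>i\<le>m. to_ac (coeff p i) * x ^ i)"
proof -
  have "ev p x = poly (map_poly to_ac p) x" by (simp add: ev_def)
  also have "\<dots> = (\<Sum>i\<le>degree p. coeff (map_poly to_ac p) i * x ^ i)"
    by (simp add: poly_altdef)
  also have "\<dots> = (\<Sum>i\<le>m. coeff (map_poly to_ac p) i * x ^ i)"
    by (rule sum.mono_neutral_left) (use assms in \<open>auto simp: coeff_map_poly coeff_eq_0\<close>)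
  finally show ?thesis by (simp add: coeff_map_poly)
qed

lemma ev_dvd:
  assumes "p dvd r" "ev p x = 0"
  shows "ev r x = 0"
proof -
  from assms(1) obtain s where "r = p * s" by (elim dvdE)
  thus ?thesis using assms(2) by simp
qed

lemma ev_root_exists:
  assumes "degree p > 0"
  shows "\<exists>x. ev p x = 0"
  using alg_closed_imp_poly_has_root[of "map_poly to_ac p"] assms by (simp add: ev_def)

lemma ev_Hm:
  "ev (Hm m p u v) x = (\<Sum>i\<le>m. to_ac (coeff p i) * ev u x ^ i * ev v x ^ (m - i))"
  by (simp add: Hm_def mult.assoc)

lemma min_root_poly_dvd:
  fixes s r :: "'a::field poly"
  assumes s: "s \<noteq> 0" "ev s w = 0"
    and smin: "\<And>s'. s' \<noteq> 0 \<Longrightarrow> ev s' w = 0 \<Longrightarrow> degree s \<le> degree s'"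
    and r: "ev r w = 0"
  shows "s dvd r"
proof -
  have "r = s * (r div s) + r mod s" by simp
  hence "ev r w = ev s w * ev (r div s) w + ev (r mod s) w" by (metis ev_add ev_mult)
  hence e: "ev (r mod s) w = 0" using s r by simp
  have "r mod s = 0"
  proof (rule ccontr)
    assume "r mod s \<noteq> 0"
    hence "degree (r mod s) < degree s" using s by (intro degree_mod_less')
    moreover have "degree s \<le> degree (r mod s)" using smin[OF \<open>r mod s \<noteq> 0\<close> e] .
    ultimately show False by simp
  qed
  thus ?thesis by (simp add: mod_eq_0_iff_dvd)
qed

lemma common_root_dvd:
  fixes p r :: "'a::field poly"
  assumes irr: "irreducible p" and pw: "ev p w = 0" and rw: "ev r w = 0"
  shows "p dvd r"
proof -
  define d where "d = (LEAST d. \<exists>s. s \<noteq> 0 \<and> ev s w = 0 \<and> degree s = d)"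
  have ex: "\<exists>s. s \<noteq> 0 \<and> ev s w = 0 \<and> degree s = degree p"
    using irr pw by (intro exI[of _ p]) auto
  have "\<exists>s. s \<noteq> 0 \<and> ev s w = 0 \<and> degree s = d"
    unfolding d_def by (rule LeastI_ex) (use ex in blast)
  then obtain s where s: "s \<noteq> 0" "ev s w = 0" "degree s = d" by blast
  have smin: "degree s \<le> degree s'" if "s' \<noteq> 0" "ev s' w = 0" for s'
    unfolding s(3) d_def by (rule Least_le) (use that in blast)
  have sp: "s dvd p" by (rule min_root_poly_dvd[OF s(1,2) smin pw])
  have sr: "s dvd r" by (rule min_root_poly_dvd[OF s(1,2) smin rw])
  from sp obtain t where t: "p = s * t" by (elim dvdE)
  have "\<not> is_unit s"
  proof
    assume "is_unit s"
    then obtain c where "s = [:c:]" "c dvd 1" by (elim is_unit_polyE)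
    thus False using s(1,2) by simp
  qed
  hence "is_unit t" using Factorial_Ring.irreducibleD[OF irr t] by blast
  hence "p dvd s" using t by (metis dvd_mult_unit_iff dvd_refl)
  thus ?thesis using sr by (rule dvd_trans)
qed

lemma ev_frob:
  fixes p :: "'a::{field,finite} poly"
  shows "ev p (x ^ (card (UNIV :: 'a set) ^ j)) = (ev p x) ^ (card (UNIV :: 'a set) ^ j)"
proof (induction p)
  case 0
  have "card (UNIV :: 'a set) ^ j > 0" using card_ge2[where 'a='a] by simp
  thus ?case by simp
next
  case (pCons a p)
  have fr: "frob_ok (card (UNIV :: 'a set) ^ j) TYPE('a alg_closure)"
    by (rule frob_ok_pow[OF frob_ok_ac])
  show ?case
    using pCons.IH frob_add[OF fr] to_ac_pow_card[of a j] by (simp add: power_mult_distrib)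
qed




lemma pow_diff_dvd: "(x - y) dvd (x ^ k - y ^ (k::nat))" for x y :: "'b::comm_ring_1"
proof (induction k)
  case (Suc k)
  have "x ^ Suc k - y ^ Suc k = x * (x ^ k - y ^ k) + (x - y) * y ^ k" by (simp add: algebra_simps)
  thus ?case using Suc by simp
qed simp

lemma lin_split: "[:a, 1:] = [:a:] + monom 1 1"
  by (rule poly_eqI) (simp add: coeff_pCons coeff_monom split: nat.split)

locale mt =
  fixes f :: "'a::{field,finite} poly" and \<beta> \<gamma> :: 'a and n :: nat
  assumes n1: "n \<ge> 1" and Q2: "card (UNIV :: 'a set) ^ n > 2"
    and bg: "\<beta> \<noteq> - \<gamma>" and prim: "primitive_poly n f" and fne: "f \<noteq> [:-1, 1:]"
begin

abbreviation "XX \<equiv> (monom 1 1 :: 'a poly)"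
abbreviation "Uu \<equiv> monom 1 (card (UNIV :: 'a set) ^ n) + [:\<beta>:]"
abbreviation "Up \<equiv> [:\<beta>, 1:]"
abbreviation "Vv \<equiv> [:-\<gamma>, 1:]"
abbreviation "NN \<equiv> hom_num n \<beta> \<gamma> f"
abbreviation "DD \<equiv> den_poly n \<beta> \<gamma> f"

lemma degf: "degree f = n" using prim by (simp add: primitive_poly_def)
lemma monf: "lead_coeff f = 1" using prim by (auto simp: primitive_poly_def)
lemma irrf: "irreducible f" using prim by (simp add: primitive_poly_def)
lemma fdvd: "f dvd monom 1 ((card (UNIV :: 'a set) ^ n) - 1) - 1" using prim by (simp add: primitive_poly_def)
lemma fndvd: "0 < k \<Longrightarrow> k < (card (UNIV :: 'a set) ^ n) - 1 \<Longrightarrow> \<not> f dvd monom 1 k - 1"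
  using prim by (simp add: primitive_poly_def)
lemma bg': "\<beta> + \<gamma> \<noteq> 0"
proof
  assume "\<beta> + \<gamma> = 0"
  hence "\<beta> = - \<gamma>" by (simp add: eq_neg_iff_add_eq_0)
  with bg show False by simp
qed
lemma q2: "card (UNIV :: 'a set) \<ge> 2" by (rule card_ge2)
lemma Qpos: "(card (UNIV :: 'a set) ^ n) \<ge> 3" using Q2 by simp

lemma frobP: "frob_ok (card (UNIV :: 'a set) ^ n) TYPE('a poly)" by (rule frob_ok_pow[OF frob_ok_poly])
lemma frobK: "frob_ok (card (UNIV :: 'a set) ^ n) TYPE('a alg_closure)" by (rule frob_ok_pow[OF frob_ok_ac])

lemma N_Hm: "NN = Hm n f Uu Vv"
  by (simp add: hom_num_def Hm_def)

lemma hstar_Hm: "h_star n \<beta> \<gamma> f = Hm n (h_poly \<beta> \<gamma> f) 1 XX"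
  by (simp add: h_star_def Hm_def monom_altdef)

lemma D_Hm: "DD = Hm n f Up Vv"
proof -
  have "Hm n (h_poly \<beta> \<gamma> f) 1 XX = Hm n f (Hm 1 [:1, \<beta> + \<gamma>:] 1 XX) XX"
    unfolding h_poly_def by (rule Hm_comp) (simp_all add: degf)
  also have "Hm 1 [:1, \<beta> + \<gamma>:] 1 XX = [:\<beta> + \<gamma>, 1:]"
    by (simp add: Hm_def lin_split add.commute)
  finally have "h_star n \<beta> \<gamma> f = Hm n f [:\<beta> + \<gamma>, 1:] XX" by (simp add: hstar_Hm)
  hence "DD = pcompose (Hm n f [:\<beta> + \<gamma>, 1:] XX) Vv" by (simp add: den_poly_def)
  also have "\<dots> = Hm n f (pcompose [:\<beta> + \<gamma>, 1:] Vv) (pcompose XX Vv)" by (rule Hm_pcompose)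
  also have "pcompose [:\<beta> + \<gamma>, 1:] Vv = Up" by (simp add: pcompose_pCons)
  also have "pcompose XX Vv = Vv" by (simp add: monom_altdef pcompose_pCons)
  finally show ?thesis .
qed

end



lemma aux_ring:
  assumes "(d::'b::comm_ring_1) * h = a - b * c"
  shows "d * (h * v) = v * a - b * (v * c)"
proof -
  have "d * (h * v) = (d * h) * v" by (simp add: mult.assoc)
  also have "\<dots> = (a - b * c) * v" using assms by simp
  finally show ?thesis by (simp add: algebra_simps)
qed

context mt
begin

lemma f1: "poly f 1 \<noteq> 0"
proof
  assume "poly f 1 = 0"
  hence "[:-1, 1:] dvd f" by (simp add: poly_eq_0_iff_dvd)
  then obtain t where t: "f = [:-1, 1:] * t" by (elim dvdE)
  have "\<not> is_unit [:-1, 1::'a:]"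
    by (simp add: is_unit_poly_iff)
  hence "is_unit t" using Factorial_Ring.irreducibleD[OF irrf t] by blast
  then obtain c where c: "t = [:c:]" "c dvd 1" by (elim is_unit_polyE)
  have "lead_coeff f = c" using t c by simp
  hence "c = 1" using monf by simp
  hence "f = [:-1, 1:]" using t c by simp
  with fne show False ..
qed

lemma deg_hstar: "degree (h_star n \<beta> \<gamma> f) = n"
proof (rule antisym)
  show "degree (h_star n \<beta> \<gamma> f) \<le> n"
    unfolding h_star_def
    by (rule degree_sum_le) (auto intro: order.trans[OF degree_monom_le])
  have "coeff (h_star n \<beta> \<gamma> f) n = (\<Sum>i\<le>n. if i = 0 then coeff (h_poly \<beta> \<gamma> f) i else 0)"
    unfolding h_star_def coeff_sum
    by (intro sum.cong refl) (auto simp: coeff_monom)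
  also have "\<dots> = coeff (h_poly \<beta> \<gamma> f) 0" by simp
  also have "\<dots> = poly f 1" by (simp add: h_poly_def poly_0_coeff_0[symmetric] poly_pcompose)
  finally have "coeff (h_star n \<beta> \<gamma> f) n \<noteq> 0" using f1 by simp
  thus "n \<le> degree (h_star n \<beta> \<gamma> f)" by (rule le_degree)
qed

lemma deg_D: "degree DD = n"
  by (simp add: den_poly_def degree_pcompose deg_hstar)

lemma D_nz: "DD \<noteq> 0" using deg_D n1 by auto

lemma XQ_deg: "degree (monom 1 (card (UNIV :: 'a set) ^ n) - XX) = card (UNIV :: 'a set) ^ n"
proof -
  have "degree (monom 1 (card (UNIV :: 'a set) ^ n) + (- XX)) = card (UNIV :: 'a set) ^ n"
    using Qpos by (subst degree_add_eq_left) (simp_all add: degree_monom_eq)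
  thus ?thesis by simp
qed

lemma XQ_fact: "monom 1 (card (UNIV :: 'a set) ^ n) - XX = f * (XX * ((monom 1 (card (UNIV :: 'a set) ^ n - 1) - 1) div f))"
proof -
  have "monom 1 (card (UNIV :: 'a set) ^ n) - XX = XX * (monom 1 (card (UNIV :: 'a set) ^ n - 1) - 1)"
  proof -
    have Q1: "Suc (card (UNIV :: 'a set) ^ n - 1) = card (UNIV :: 'a set) ^ n" using Qpos by simp
    show ?thesis using Q1 by (simp add: algebra_simps mult_monom)
  qed
  also have "monom 1 (card (UNIV :: 'a set) ^ n - 1) - 1 = f * ((monom 1 (card (UNIV :: 'a set) ^ n - 1) - 1) div f)"
    using fdvd by simp
  finally show ?thesis by (simp add: mult_ac)
qed

lemma Up_pow: "Up ^ (card (UNIV :: 'a set) ^ n) = monom 1 (card (UNIV :: 'a set) ^ n) + [:\<beta>:]"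
  using Qpos frob_add[OF frobP, of "[:\<beta>:]" XX]
  by (simp add: lin_split monom_power poly_const_pow fermat_a_pow add.commute)

lemma Vv_pow: "Vv ^ (card (UNIV :: 'a set) ^ n) = monom 1 (card (UNIV :: 'a set) ^ n) + [:-\<gamma>:]"
  using Qpos frob_add[OF frobP, of "[:-\<gamma>:]" XX]
  by (simp add: lin_split[of "-\<gamma>"] monom_power poly_const_pow fermat_a_pow add.commute)

lemma D_dvd_XQ: "DD dvd monom 1 (card (UNIV :: 'a set) ^ n) - XX"
proof -
  define Q where "Q = card (UNIV :: 'a set) ^ n"
  define kk where "kk = XX * ((monom 1 (Q - 1) - 1) div f)"
  have fk: "monom 1 Q - XX = f * kk" using XQ_fact by (simp add: kk_def Q_def)
  have kk0: "kk \<noteq> 0" using fk XQ_deg Qpos Q_def by auto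
  have f0: "f \<noteq> 0" using irrf by auto
  have dk: "degree kk = Q - n"
    using fk XQ_deg degree_mult_eq[OF f0 kk0] degf Q_def by simp
  have nQ: "n \<le> Q" using fk XQ_deg degree_mult_eq[OF f0 kk0] degf Q_def by simp
  have "Hm (n + (Q - n)) (f * kk) Up Vv = Hm n f Up Vv * Hm (Q - n) kk Up Vv"
    by (rule Hm_mult) (simp_all add: degf dk)
  hence e1: "Hm Q (monom 1 Q - XX) Up Vv = DD * Hm (Q - n) kk Up Vv"
    using nQ fk by (simp add: D_Hm)
  have "Hm Q (monom 1 Q - XX) Up Vv = Up ^ Q - Up * Vv ^ (Q - 1)"
    using Qpos Q_def by (simp add: Hm_diff Hm_monom)
  hence "DD * Hm (Q - n) kk Up Vv = Up ^ Q - Up * Vv ^ (Q - 1)" using e1 by simp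
  hence "DD * (Hm (Q - n) kk Up Vv * Vv) = Vv * Up ^ Q - Up * (Vv * Vv ^ (Q - 1))"
    by (rule aux_ring)
  also have "Vv * Vv ^ (Q - 1) = Vv ^ Q"
  proof -
    define m where "m = Q - 1"
    have m: "Q = Suc m" using Qpos Q_def m_def by simp
    show ?thesis unfolding m by simp
  qed
  also have "Vv * Up ^ Q - Up * Vv ^ Q = [:\<beta> + \<gamma>:] * (XX - monom 1 Q)"
  proof -
    have a: "Vv = XX - [:\<gamma>:]"
      by (intro poly_eqI) (auto simp: coeff_monom coeff_pCons split: nat.split)
    have b: "Up = XX + [:\<beta>:]"
      by (intro poly_eqI) (auto simp: coeff_monom coeff_pCons split: nat.split)
    have c: "[:\<beta> + \<gamma>:] = [:\<beta>:] + [:\<gamma>:]" by simp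
    have d: "[:-\<gamma>:] = - [:\<gamma>:]" by simp
    show ?thesis unfolding Up_pow[folded Q_def] Vv_pow[folded Q_def] unfolding a b c d
      by (simp add: algebra_simps smult_add_left)
  qed
  finally have eq: "DD * (Hm (Q - n) kk Up Vv * Vv) = [:\<beta> + \<gamma>:] * (XX - monom 1 Q)" .
  have dv: "DD dvd [:\<beta> + \<gamma>:] * (XX - monom 1 Q)" unfolding eq[symmetric] by (rule dvd_triv_left)
  have un: "is_unit [:\<beta> + \<gamma>:]"
  proof -
    have "(\<beta> + \<gamma>) dvd 1" using bg' by (intro dvdI[of _ _ "inverse (\<beta> + \<gamma>)"]) simp
    thus ?thesis by (simp add: is_unit_const_poly_iff)
  qed
  have "DD dvd (XX - monom 1 Q)"
    using dvd_mult_unit_iff'[OF un, of DD "XX - monom 1 Q"] dv by blast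
  hence "DD dvd - (XX - monom 1 Q)" by (simp only: dvd_minus_iff)
  thus ?thesis by (simp add: Q_def)
qed

lemma D_dvd_N: "DD dvd NN"
proof -
  have "NN - DD = (\<Sum>i\<le>n. smult (coeff f i) ((Uu ^ i - Up ^ i) * Vv ^ (n - i)))"
    unfolding N_Hm D_Hm Hm_def
    by (simp add: sum_subtractf[symmetric] algebra_simps smult_diff_right)
  also have "DD dvd \<dots>"
  proof (rule dvd_sum)
    fix i
    have "Uu - Up = monom 1 (card (UNIV :: 'a set) ^ n) - XX"
      using Qpos by (intro poly_eqI) (auto simp: coeff_monom coeff_pCons split: nat.split)
    hence "DD dvd Uu - Up" using D_dvd_XQ by (simp only:)
    also have "Uu - Up dvd Uu ^ i - Up ^ i" by (rule pow_diff_dvd)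
    finally show "DD dvd smult (coeff f i) ((Uu ^ i - Up ^ i) * Vv ^ (n - i))"
      by (simp add: dvd_smult)
  qed
  finally have "DD dvd NN - DD" .
  hence "DD dvd (NN - DD) + DD" by (intro dvd_add dvd_refl)
  thus ?thesis by simp
qed

end



lemma pderiv_sum': "pderiv (\<Sum>i\<in>A. p i) = (\<Sum>i\<in>A. pderiv (p i))"
  by (induction A rule: infinite_finite_induct) (simp_all add: pderiv_add)

lemma small_irr_factor:
  fixes a F :: "'a::field poly"
  assumes "a dvd F" "a \<noteq> 0" "\<not> is_unit a"
  shows "\<exists>g. irreducible g \<and> g dvd F \<and> degree g \<le> degree a"
  using assms
proof (induction "degree a" arbitrary: a rule: less_induct)
  case less
  show ?case
  proof (cases "irreducible a")
    case True
    thus ?thesis using less.prems by blast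
  next
    case False
    then obtain x y where xy: "a = x * y" "\<not> is_unit x" "\<not> is_unit y"
      using less.prems unfolding Factorial_Ring.irreducible_def by blast
    have x0: "x \<noteq> 0" and y0: "y \<noteq> 0" using xy less.prems by auto
    have "degree y \<noteq> 0" using xy(3) y0 is_unit_iff_degree by blast
    hence lt: "degree x < degree a" using xy(1) x0 y0 by (simp add: degree_mult_eq)
    have "x dvd a" using xy(1) by simp
    hence "x dvd F" using less.prems(1) by (rule dvd_trans)
    from less.hyps[OF lt this x0 xy(2)] obtain g where
      "irreducible g" "g dvd F" "degree g \<le> degree x" by blast
    thus ?thesis using lt by (intro exI[of _ g]) auto
  qed
qed

lemma pow_minus_one_dvd:
  assumes q: "(q::nat) \<ge> 2" and n: "n \<ge> 1" and dv: "q ^ n - 1 dvd q ^ d - 1"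
  shows "n dvd d"
proof -
  define a where "a = d div n"
  define r where "r = d mod n"
  have d: "d = n * a + r" by (simp add: a_def r_def)
  have rn: "r < n" using n by (simp add: r_def)
  have qpos: "\<And>k. (1::int) \<le> int q ^ k" using q by (simp add: one_le_power)
  have q1: "\<And>k. 1 \<le> q ^ k" using q by (simp add: one_le_power)
  have "int (q ^ n - 1) dvd int (q ^ d - 1)" using dv by (simp only: int_dvd_int_iff)
  hence dvi: "int q ^ n - 1 dvd int q ^ d - 1" using q1[of n] q1[of d] by (simp add: of_nat_diff)
  have "int q ^ n - 1 dvd (int q ^ n) ^ a - 1 ^ a" by (rule pow_diff_dvd)
  hence "int q ^ n - 1 dvd int q ^ r * ((int q ^ n) ^ a - 1)" by simp
  moreover have "int q ^ d = int q ^ r * (int q ^ n) ^ a"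
    unfolding d by (simp add: power_add power_mult)
  hence eqd: "int q ^ d - 1 = int q ^ r * ((int q ^ n) ^ a - 1) + (int q ^ r - 1)"
    by (simp add: algebra_simps)
  ultimately have h1: "int q ^ n - 1 dvd int q ^ r * ((int q ^ n) ^ a - 1)" by simp
  have "int q ^ n - 1 dvd int q ^ r * ((int q ^ n) ^ a - 1) + (int q ^ r - 1)" using dvi eqd by simp
  hence "int q ^ n - 1 dvd int q ^ r - 1" using dvd_add_right_iff[OF h1] by simp
  moreover have "int q ^ r - 1 < int q ^ n - 1"
    using rn q by (simp add: power_strict_increasing)
  moreover have "0 \<le> int q ^ r - 1" using q by simp
  ultimately have "int q ^ r - 1 = 0"
  proof -
    assume a1: "int q ^ n - 1 dvd int q ^ r - 1" and a2: "int q ^ r - 1 < int q ^ n - 1" and a3: "0 \<le> int q ^ r - 1"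
    show ?thesis
    proof (rule ccontr)
      assume "int q ^ r - 1 \<noteq> 0"
      hence "0 < int q ^ r - 1" using a3 by linarith
      from zdvd_not_zless[OF this a2] a1 show False by simp
    qed
  qed
  hence "int q ^ r = 1" by simp
  hence "r = 0"
  proof -
    assume r1: "int q ^ r = 1"
    show "r = 0"
    proof (rule ccontr)
      assume "r \<noteq> 0"
      hence "int q \<le> int q ^ r" using q by (intro self_le_power) auto
      thus False using r1 q by simp
    qed
  qed
  thus ?thesis using d by simp
qed

context mt
begin

lemma deg_Uu: "degree Uu = card (UNIV :: 'a set) ^ n"
  using Qpos q2 by (subst degree_add_eq_left) (simp_all add: degree_monom_eq)

lemma deg_N: "degree NN = n * card (UNIV :: 'a set) ^ n"
proof -
  define Q where "Q = card (UNIV :: 'a set) ^ n"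
  define g where "g = (\<lambda>i. smult (coeff f i) (Uu ^ i * Vv ^ (n - i)))"
  have "NN = (\<Sum>i\<le>n. g i)" by (simp add: N_Hm Hm_def g_def)
  also have "{..n} = insert n {..<n}" by auto
  also have "(\<Sum>i\<in>insert n {..<n}. g i) = g n + (\<Sum>i<n. g i)" by simp
  also have "g n = Uu ^ n" using monf degf by (simp add: g_def)
  finally have e: "NN = Uu ^ n + (\<Sum>i<n. g i)" .
  have dU: "degree (Uu ^ n) = n * Q"
    using deg_Uu Qpos by (subst degree_power_eq) (auto simp: Q_def)
  have "degree (\<Sum>i<n. g i) < n * Q"
  proof (rule degree_sum_less)
    fix i assume "i \<in> {..<n}"
    hence i: "i < n" by simp
    have "degree (g i) \<le> degree (Uu ^ i * Vv ^ (n - i))" by (simp add: g_def degree_smult_le)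
    also have "\<dots> \<le> degree (Uu ^ i) + degree (Vv ^ (n - i))" by (rule degree_mult_le)
    also have "\<dots> \<le> i * Q + (n - i) * 1"
      using deg_Uu by (intro add_mono order.trans[OF degree_power_le]) (simp_all add: Q_def)
    also have "\<dots> < i * Q + (n - i) * Q" using i Qpos Q_def by (intro add_strict_left_mono mult_strict_left_mono) auto
    also have "\<dots> = n * Q" using i by (simp add: algebra_simps flip: add_mult_distrib)
    finally show "degree (g i) < n * Q" .
  qed (use n1 Qpos Q_def q2 in simp)
  hence "degree NN = degree (Uu ^ n)" unfolding e using dU by (intro degree_add_eq_left) simp
  thus ?thesis using dU Q_def by simp
qed

lemma N_nz: "NN \<noteq> 0"
proof
  assume "NN = 0"
  hence "degree NN = 0" by simp
  with deg_N n1 Qpos show False by simp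
qed

lemma N_eq: "NN = DD * (NN div DD)" using D_dvd_N by simp

lemma deg_F: "degree (NN div DD) = n * (card (UNIV :: 'a set) ^ n - 1)"
proof -
  have F0: "NN div DD \<noteq> 0"
  proof
    assume "NN div DD = 0"
    hence "NN = 0" using N_eq by simp
    with N_nz show False ..
  qed
  have "degree (DD * (NN div DD)) = degree DD + degree (NN div DD)" by (rule degree_mult_eq[OF D_nz F0])
  hence "degree NN = degree DD + degree (NN div DD)" using N_eq by simp
  thus ?thesis using deg_N deg_D by (simp add: diff_mult_distrib2)
qed

end



lemma ev_Hm_div:
  assumes "degree f \<le> n" "ev v x \<noteq> 0"
  shows "ev (Hm n f u v) x = ev v x ^ n * ev f (ev u x / ev v x)"
proof -
  have "ev v x ^ n * ev f (ev u x / ev v x) = (\<Sum>i\<le>n. ev v x ^ n * (to_ac (coeff f i) * (ev u x / ev v x) ^ i))"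
    by (simp add: ev_altdef[OF assms(1)] sum_distrib_left)
  also have "\<dots> = (\<Sum>i\<le>n. to_ac (coeff f i) * ev u x ^ i * ev v x ^ (n - i))"
  proof (intro sum.cong refl)
    fix i assume "i \<in> {..n}"
    hence ni: "i + (n - i) = n" by simp
    have "ev v x ^ i * ev v x ^ (n - i) = ev v x ^ (i + (n - i))" by (rule power_add[symmetric])
    hence "ev v x ^ n = ev v x ^ i * ev v x ^ (n - i)" unfolding ni by simp
    thus "ev v x ^ n * (to_ac (coeff f i) * (ev u x / ev v x) ^ i) = to_ac (coeff f i) * ev u x ^ i * ev v x ^ (n - i)"
      using assms(2) by (simp add: power_divide field_simps)
  qed
  finally show ?thesis by (simp add: ev_Hm)
qed

lemma X_pderiv:
  assumes "degree f \<le> n"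
  shows "monom 1 1 * pderiv f = (\<Sum>i\<le>n. monom (of_nat i * coeff f i) i)"
proof (rule poly_eqI)
  fix k
  have "coeff (\<Sum>i\<le>n. monom (of_nat i * coeff f i) i) k = (if k \<le> n then of_nat k * coeff f k else 0)"
    by (simp add: coeff_sum coeff_monom)
  moreover have "coeff (monom 1 1 * pderiv f) k = (if k = 0 then 0 else of_nat k * coeff f k)"
    by (cases k) (simp_all add: coeff_monom_mult coeff_pderiv monom_altdef coeff_pCons)
  moreover have "k > n \<Longrightarrow> coeff f k = 0" using assms by (simp add: coeff_eq_0)
  ultimately show "coeff (monom 1 1 * pderiv f) k = coeff (\<Sum>i\<le>n. monom (of_nat i * coeff f i) i) k"
    by auto
qed

lemma ev_X_pderiv:
  assumes "degree f \<le> n"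
  shows "x * ev (pderiv f) x = (\<Sum>i\<le>n. of_nat i * to_ac (coeff f i) * x ^ i)"
proof -
  have "ev (monom 1 1 * pderiv f) x = ev (\<Sum>i\<le>n. monom (of_nat i * coeff f i) i) x"
    by (simp only: X_pderiv[OF assms])
  thus ?thesis by (simp add: mult.assoc)
qed

lemma ord_dvd:
  fixes W :: "'b::comm_ring_1"
  assumes W1: "W ^ m = 1" and prim: "\<And>k. 0 < k \<Longrightarrow> k < m \<Longrightarrow> W ^ k \<noteq> 1" and m: "m > 0"
    and Wk: "W ^ k = 1"
  shows "m dvd k"
proof -
  have "W ^ k = W ^ (m * (k div m) + k mod m)" by simp
  also have "\<dots> = (W ^ m) ^ (k div m) * W ^ (k mod m)" by (simp only: power_add power_mult)
  finally have "W ^ k = (W ^ m) ^ (k div m) * W ^ (k mod m)" .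
  hence "W ^ (k mod m) = 1" using W1 Wk by simp
  moreover have "k mod m < m" using m by simp
  ultimately have "k mod m = 0" using prim[of "k mod m"] by (cases "k mod m = 0") auto
  thus ?thesis by (simp add: dvd_eq_mod_eq_0)
qed




context mt
begin

lemma evU: "ev Uu x = x ^ (card (UNIV :: 'a set) ^ n) + to_ac \<beta>"
  by simp
lemma evUp: "ev Up x = x + to_ac \<beta>"
  by simp
lemma evV: "ev Vv x = x - to_ac \<gamma>"
  by simp

lemma ofnat_Q: "of_nat (card (UNIV :: 'a set) ^ n) = (0::'a)"
  using of_nat_card_a[where 'a='a] n1 by (simp add: of_nat_power)

lemma ofnat_Q1: "of_nat (card (UNIV :: 'a set) ^ n - 1) = (-1::'a)"
proof -
  have "of_nat (card (UNIV :: 'a set) ^ n - 1) + (1::'a) = of_nat (card (UNIV :: 'a set) ^ n)"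
    using Qpos by (simp add: of_nat_diff)
  thus ?thesis using ofnat_Q by (simp add: eq_neg_iff_add_eq_0)
qed

lemma pderiv_U: "pderiv Uu = 0"
  using ofnat_Q by (simp add: pderiv_add pderiv_monom)

lemma pderiv_N: "pderiv NN = (\<Sum>i\<le>n. smult (coeff f i) (smult (of_nat (n - i)) (Uu ^ i * Vv ^ (n - i - 1))))"
proof -
  have "pderiv (Uu ^ i * Vv ^ (n - i)) = smult (of_nat (n - i)) (Uu ^ i * Vv ^ (n - i - 1))" for i
    by (simp add: pderiv_mult pderiv_power pderiv_U pderiv_pCons mult_ac)
  thus ?thesis by (simp add: N_Hm Hm_def pderiv_sum' pderiv_smult)
qed

end



context mt
begin

lemma core_W:
  assumes Nz: "ev NN z = 0"
  defines "W \<equiv> (z ^ (card (UNIV :: 'a set) ^ n) + to_ac \<beta>) / (z - to_ac \<gamma>)"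
  shows "z \<noteq> to_ac \<gamma>" and "ev f W = 0" and "W ^ (card (UNIV :: 'a set) ^ n - 1) = 1"
    and "\<And>k. 0 < k \<Longrightarrow> k < card (UNIV :: 'a set) ^ n - 1 \<Longrightarrow> W ^ k \<noteq> 1"
proof -
  define Q where "Q = card (UNIV :: 'a set) ^ n"
  show zg: "z \<noteq> to_ac \<gamma>"
  proof
    assume zg: "z = to_ac \<gamma>"
    have "ev NN z = (\<Sum>i\<le>n. to_ac (coeff f i) * (z ^ Q + to_ac \<beta>) ^ i * (z - to_ac \<gamma>) ^ (n - i))"
      by (simp add: N_Hm ev_Hm Q_def)
    also have "\<dots> = (\<Sum>i\<le>n. if i = n then (z ^ Q + to_ac \<beta>) ^ n else 0)"
      using zg monf degf by (intro sum.cong refl) auto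
    also have "\<dots> = (z ^ Q + to_ac \<beta>) ^ n" by simp
    also have "z ^ Q = to_ac \<gamma>" unfolding zg Q_def by (rule to_ac_pow_card)
    finally have "(to_ac \<gamma> + to_ac \<beta>) ^ n = 0" using Nz by simp
    hence "to_ac (\<gamma> + \<beta>) = 0" by (simp only: to_ac_add) simp
    hence "\<gamma> + \<beta> = 0" by (simp only: to_ac_eq_0_iff)
    hence "\<beta> + \<gamma> = 0" by (simp add: add.commute)
    with bg' show False ..
  qed
  have vz: "ev Vv z \<noteq> 0" using zg by simp
  have "ev NN z = ev Vv z ^ n * ev f (ev Uu z / ev Vv z)"
    unfolding N_Hm by (rule ev_Hm_div) (simp add: degf, rule vz)
  hence "ev f (ev Uu z / ev Vv z) = 0" using Nz vz by simp
  thus fW: "ev f W = 0" by (simp add: W_def)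
  have "ev (monom 1 (Q - 1) - 1) W = 0" using ev_dvd[OF fdvd fW] by (simp add: Q_def)
  thus "W ^ (card (UNIV :: 'a set) ^ n - 1) = 1" by (simp add: Q_def)
  fix k assume k: "0 < k" "k < card (UNIV :: 'a set) ^ n - 1"
  show "W ^ k \<noteq> 1"
  proof
    assume "W ^ k = 1"
    hence "ev (monom 1 k - 1) W = 0" by simp
    hence "f dvd monom 1 k - 1" by (rule common_root_dvd[OF irrf fW])
    with fndvd[OF k] show False ..
  qed
qed

end



lemma sq_dvd_pderiv:
  fixes g P :: "'b::idom poly"
  assumes "g * g dvd P"
  shows "g dvd pderiv P"
proof -
  from assms obtain s where s: "P = g * g * s" by (elim dvdE)
  have "pderiv P = g * (pderiv (g * s) + s * pderiv g)"
    unfolding s by (simp add: pderiv_mult algebra_simps)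
  thus ?thesis by simp
qed

context mt
begin

lemma caseA:
  assumes Nz: "ev NN z = 0" and zQ: "z ^ (card (UNIV :: 'a set) ^ n) = z"
    and g: "irreducible g" "ev g z = 0" "g dvd NN div DD"
  shows False
proof -
  define Q where "Q = card (UNIV :: 'a set) ^ n"
  define W where "W = (z ^ Q + to_ac \<beta>) / (z - to_ac \<gamma>)"
  define V0 where "V0 = z - to_ac \<gamma>"
  define Z where "Z = z ^ Q + to_ac \<beta>"
  have zg: "z \<noteq> to_ac \<gamma>" by (rule core_W(1)[OF Nz])
  have fW: "ev f W = 0" unfolding W_def Q_def by (rule core_W(2)[OF Nz])
  have W1: "W ^ (Q - 1) = 1" unfolding W_def Q_def by (rule core_W(3)[OF Nz])
  have V0nz: "V0 \<noteq> 0" using zg by (simp add: V0_def)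
  have WZ: "W = Z / V0" by (simp add: W_def Z_def V0_def)
  have W0: "W \<noteq> 0"
  proof
    assume "W = 0"
    with W1 Qpos show False by (simp add: Q_def power_0_left)
  qed
  have vz: "ev Vv z \<noteq> 0" using zg by simp
  have "ev DD z = ev Vv z ^ n * ev f (ev Up z / ev Vv z)"
    unfolding D_Hm by (rule ev_Hm_div) (simp add: degf, rule vz)
  also have "ev Up z / ev Vv z = W" using zQ by (simp add: W_def Q_def)
  finally have "ev DD z = 0" using fW by simp
  hence gD: "g dvd DD" by (rule common_root_dvd[OF g(1,2)])
  have "g * g dvd DD * (NN div DD)" using gD g(3) by (rule mult_dvd_mono)
  hence "g * g dvd NN" using N_eq by simp
  hence "g dvd pderiv NN" by (rule sq_dvd_pderiv)
  hence dN: "ev (pderiv NN) z = 0" by (rule ev_dvd) (rule g(2))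
  have "ev (pderiv NN) z = (\<Sum>i\<le>n. to_ac (coeff f i) * (of_nat (n - i) * (Z ^ i * V0 ^ (n - i - 1))))"
    by (simp add: pderiv_N Z_def V0_def Q_def mult.assoc)
  hence "0 = V0 * (\<Sum>i\<le>n. to_ac (coeff f i) * (of_nat (n - i) * (Z ^ i * V0 ^ (n - i - 1))))"
    using dN by simp
  also have "\<dots> = (\<Sum>i\<le>n. V0 ^ n * (to_ac (coeff f i) * of_nat (n - i) * W ^ i))"
    unfolding sum_distrib_left
  proof (intro sum.cong refl)
    fix i assume "i \<in> {..n}"
    hence i: "i \<le> n" by simp
    show "V0 * (to_ac (coeff f i) * (of_nat (n - i) * (Z ^ i * V0 ^ (n - i - 1)))) =
          V0 ^ n * (to_ac (coeff f i) * of_nat (n - i) * W ^ i)"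
    proof (cases "i = n")
      case True thus ?thesis by simp
    next
      case False
      hence e1: "V0 * V0 ^ (n - i - 1) = V0 ^ (n - i)" using i
        by (metis Suc_diff_Suc diff_Suc_1 diff_diff_left le_neq_implies_less power_Suc zero_less_diff)
      have e2: "V0 ^ n = V0 ^ i * V0 ^ (n - i)" using i by (simp flip: power_add)
      show ?thesis unfolding WZ using V0nz e1 e2
        by (simp add: power_divide field_simps)
    qed
  qed
  also have "\<dots> = V0 ^ n * (\<Sum>i\<le>n. to_ac (coeff f i) * of_nat (n - i) * W ^ i)"
    by (simp add: sum_distrib_left)
  also have "(\<Sum>i\<le>n. to_ac (coeff f i) * of_nat (n - i) * W ^ i)
      = of_nat n * (\<Sum>i\<le>n. to_ac (coeff f i) * W ^ i) - (\<Sum>i\<le>n. of_nat i * to_ac (coeff f i) * W ^ i)"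
    by (simp add: sum_distrib_left sum_subtractf[symmetric] of_nat_diff algebra_simps)
  also have "(\<Sum>i\<le>n. to_ac (coeff f i) * W ^ i) = ev f W" using ev_altdef[of f n W] degf by simp
  also have "(\<Sum>i\<le>n. of_nat i * to_ac (coeff f i) * W ^ i) = W * ev (pderiv f) W"
    using ev_X_pderiv[of f n W] degf by simp
  finally have "V0 ^ n * (W * ev (pderiv f) W) = 0" using fW by simp
  hence fdW: "ev (pderiv f) W = 0" using V0nz W0 by simp
  \<comment> \<open>separability\<close>
  define k1 where "k1 = (monom 1 (Q - 1) - 1) div f"
  have fk: "monom 1 (Q - 1) - 1 = f * k1" using fdvd by (simp add: k1_def Q_def)
  have "pderiv (monom 1 (Q - 1) - 1 :: 'a poly) = monom (of_nat (Q - 1)) (Q - 1 - 1)"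
    by (simp add: Polynomial.pderiv_diff Polynomial.pderiv_monom)
  also have "of_nat (Q - 1) = (-1 :: 'a)" unfolding Q_def by (rule ofnat_Q1)
  finally have "pderiv (f * k1) = monom (-1) (Q - 1 - 1)" using fk by simp
  hence "ev (pderiv (f * k1)) W = - (W ^ (Q - 1 - 1))" by simp
  moreover have "ev (pderiv (f * k1)) W = 0" using fW fdW by (simp add: pderiv_mult)
  ultimately have "W ^ (Q - 1 - 1) = 0" by simp
  hence "W = 0" by simp
  with W0 show False ..
qed

end



lemma frob_period:
  fixes z :: "'a::{field,finite} alg_closure"
  assumes "i < j" "z ^ (card (UNIV :: 'a set) ^ i) = z ^ (card (UNIV :: 'a set) ^ j)"
  shows "z ^ (card (UNIV :: 'a set) ^ (j - i)) = z"
proof -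
  define q where "q = card (UNIV :: 'a set)"
  have qp: "q ^ i > 0" using card_ge2[where 'a='a] by (simp add: q_def)
  have "q ^ j = q ^ (j - i) * q ^ i" using assms(1) by (simp flip: power_add)
  hence "z ^ (q ^ j) = (z ^ (q ^ (j - i))) ^ (q ^ i)" by (simp add: power_mult)
  hence "(z ^ (q ^ (j - i))) ^ (q ^ i) = z ^ (q ^ i)" using assms(2) by (simp add: q_def)
  moreover have qp': "card (UNIV :: 'a set) ^ i > 0" using qp by (simp add: q_def)
  ultimately show ?thesis
    using frob_inj[OF frob_ok_pow[OF frob_ok_ac, of i] qp'] by (simp add: q_def)
qed

lemma pigeon_root:
  fixes g :: "'a::{field,finite} poly"
  assumes g0: "g \<noteq> 0" and gz: "ev g z = 0"
  shows "\<exists>d. 1 \<le> d \<and> d \<le> degree g \<and> z ^ (card (UNIV :: 'a set) ^ d) = z"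
proof -
  define q where "q = card (UNIV :: 'a set)"
  define s where "s = (\<lambda>i. z ^ (q ^ i))"
  define R where "R = {x. poly (map_poly to_ac g) x = 0}"
  have G0: "map_poly to_ac g \<noteq> 0" using g0 by (simp add: map_poly_eq_0_iff)
  have finR: "finite R" unfolding R_def using G0 by (rule poly_roots_finite)
  have cardR: "card R \<le> degree g" unfolding R_def using card_poly_roots_bound[OF G0] by simp
  have sR: "s ` {0..degree g} \<subseteq> R"
  proof
    fix x assume "x \<in> s ` {0..degree g}"
    then obtain i where x: "x = z ^ (q ^ i)" by (auto simp: s_def)
    have "q ^ i > 0" using card_ge2[where 'a='a] by (simp add: q_def)
    hence "ev g x = 0" unfolding x q_def using gz by (simp add: ev_frob)
    thus "x \<in> R" by (simp add: R_def ev_def)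
  qed
  have "\<not> inj_on s {0..degree g}"
  proof
    assume "inj_on s {0..degree g}"
    hence "card {0..degree g} \<le> card R" using sR finR by (rule card_inj_on_le)
    thus False using cardR by simp
  qed
  then obtain i j where ij: "i \<in> {0..degree g}" "j \<in> {0..degree g}" "i \<noteq> j" "s i = s j"
    unfolding inj_on_def by blast
  show ?thesis
  proof (cases "i < j")
    case True
    have "z ^ (q ^ (j - i)) = z" using frob_period[OF True] ij(4) by (simp add: s_def q_def)
    thus ?thesis using True ij by (intro exI[of _ "j - i"]) (auto simp: q_def)
  next
    case False
    hence ji: "j < i" using ij(3) by simp
    have "z ^ (q ^ (i - j)) = z" using frob_period[OF ji] ij(4)[symmetric] by (simp add: s_def q_def)
    thus ?thesis using ji ij by (intro exI[of _ "i - j"]) (auto simp: q_def)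
  qed
qed




context mt
begin

lemma caseB:
  assumes Nz: "ev NN z = 0" and zQ: "z ^ (card (UNIV :: 'a set) ^ n) \<noteq> z"
    and g: "irreducible g" "ev g z = 0"
  shows "n * (card (UNIV :: 'a set) ^ n - 1) \<le> degree g"
proof -
  define q where "q = card (UNIV :: 'a set)"
  define Q where "Q = card (UNIV :: 'a set) ^ n"
  define W where "W = (z ^ Q + to_ac \<beta>) / (z - to_ac \<gamma>)"
  have Qq: "Q = q ^ n" by (simp add: Q_def q_def)
  have zg: "z \<noteq> to_ac \<gamma>" by (rule core_W(1)[OF Nz])
  have W1: "W ^ (Q - 1) = 1" unfolding W_def Q_def by (rule core_W(3)[OF Nz])
  have Wp: "\<And>k. 0 < k \<Longrightarrow> k < Q - 1 \<Longrightarrow> W ^ k \<noteq> 1"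
    unfolding W_def Q_def by (rule core_W(4)[OF Nz])
  have Q3: "Q \<ge> 3" using Qpos by (simp add: Q_def)
  have W0: "W \<noteq> 0"
  proof
    assume "W = 0"
    with W1 Q3 show False by (simp add: power_0_left)
  qed
  have Wne1: "W \<noteq> 1" using Wp[of 1] Q3 by simp
  have WQ: "W ^ Q = W"
  proof -
    have "W ^ Q = W * W ^ (Q - 1)" using Q3 by (simp flip: power_Suc)
    thus ?thesis using W1 by simp
  qed
  have Wdef: "W * (z - to_ac \<gamma>) = z ^ Q + to_ac \<beta>" using zg by (simp add: W_def)
  have g0: "g \<noteq> 0" using g(1) by auto
  from pigeon_root[OF g0 g(2)] obtain d where d: "1 \<le> d" "d \<le> degree g" "z ^ (q ^ d) = z"
    by (auto simp: q_def)
  define M where "M = q ^ d"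
  have frM: "frob_ok M TYPE('a alg_closure)" unfolding M_def q_def by (rule frob_ok_pow[OF frob_ok_ac])
  have frQ: "frob_ok Q TYPE('a alg_closure)" unfolding Q_def by (rule frobK)
  have zM: "z ^ M = z" using d by (simp add: M_def)
  have cM: "\<And>c::'a. to_ac c ^ M = to_ac c" unfolding M_def q_def using to_ac_pow_card by blast
  have cQ: "\<And>c::'a. to_ac c ^ Q = to_ac c" unfolding Q_def using to_ac_pow_card by blast
  have M1: "M \<ge> 1" using q2 by (simp add: M_def q_def)
  have WM: "W ^ M = W"
  proof -
    have "(z ^ Q + to_ac \<beta>) ^ M = (z ^ M) ^ Q + to_ac \<beta>"
      by (simp add: frob_add[OF frM] cM flip: power_mult) (simp add: mult.commute)
    moreover have "(z - to_ac \<gamma>) ^ M = z - to_ac \<gamma>" by (simp add: frob_diff[OF frM] cM zM)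
    ultimately show ?thesis using zM by (simp add: W_def power_divide)
  qed
  have "W ^ (M - 1) = 1"
  proof -
    have "W * W ^ (M - 1) = W * 1" using WM M1 by (simp flip: power_Suc)
    thus ?thesis using W0 by simp
  qed
  hence "Q - 1 dvd M - 1" using Q3 by (intro ord_dvd[OF W1 Wp]) simp_all
  hence "n dvd d" using pow_minus_one_dvd[OF q2 n1] by (simp add: M_def Q_def q_def)
  then obtain j where j: "d = n * j" by (elim dvdE)
  have j1: "j \<ge> 1" using j d(1) by (cases j) auto
  have MQ: "M = Q ^ j" by (simp add: M_def Qq j power_mult)
  define x0 where "x0 = (to_ac \<beta> + W * to_ac \<gamma>) / (W - 1)"
  define Y where "Y = z - x0"
  have W1': "W - 1 \<noteq> 0" using Wne1 by simp
  have x0e: "x0 * (W - 1) = to_ac \<beta> + W * to_ac \<gamma>" using W1' by (simp add: x0_def)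
  have x0Q: "x0 ^ Q = x0"
  proof -
    have "(to_ac \<beta> + W * to_ac \<gamma>) ^ Q = to_ac \<beta> + W * to_ac \<gamma>"
      by (simp add: frob_add[OF frQ] power_mult_distrib cQ WQ)
    moreover have "(W - 1) ^ Q = W - 1" by (simp add: frob_diff[OF frQ] WQ)
    ultimately show ?thesis by (simp add: x0_def power_divide)
  qed
  have YQ: "Y ^ Q = W * Y"
  proof -
    have "Y ^ Q = z ^ Q - x0" by (simp add: Y_def frob_diff[OF frQ] x0Q)
    also have "z ^ Q = W * (z - to_ac \<gamma>) - to_ac \<beta>" using Wdef by simp
    finally have "Y ^ Q = W * (z - to_ac \<gamma>) - to_ac \<beta> - x0" .
    also have "\<dots> = W * Y" using x0e by (simp add: Y_def algebra_simps)
    finally show ?thesis .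
  qed
  have Yk: "Y ^ (Q ^ k) = W ^ k * Y" for k
  proof (induction k)
    case (Suc k)
    have "Y ^ (Q ^ Suc k) = (Y ^ (Q ^ k)) ^ Q" by (simp add: power_mult mult.commute flip: power_mult)
    also have "\<dots> = (W ^ Q) ^ k * Y ^ Q" by (simp add: Suc power_mult_distrib flip: power_mult) (simp add: mult.commute)
    also have "\<dots> = W ^ Suc k * Y" by (simp add: WQ YQ)
    finally show ?case .
  qed simp
  have x0k: "x0 ^ (Q ^ k) = x0" for k
  proof (induction k)
    case (Suc k)
    have "x0 ^ (Q ^ Suc k) = (x0 ^ (Q ^ k)) ^ Q" by (simp add: power_mult mult.commute flip: power_mult)
    thus ?case using Suc x0Q by simp
  qed simp
  have "Y ^ M = z ^ M - x0 ^ M" unfolding Y_def by (rule frob_diff[OF frM])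
  also have "\<dots> = Y" using zM x0k[of j] MQ by (simp add: Y_def)
  finally have "Y ^ M = Y" .
  hence WjY: "W ^ j * Y = Y" using Yk[of j] MQ by simp
  have Y0: "Y \<noteq> 0"
  proof
    assume "Y = 0"
    hence "z = x0" by (simp add: Y_def)
    with x0Q zQ show False by (simp add: Q_def)
  qed
  have "W ^ j = 1" using WjY Y0 by (metis mult_cancel_right2)
  hence "Q - 1 dvd j" using Q3 by (intro ord_dvd[OF W1 Wp]) simp_all
  hence "Q - 1 \<le> j" using j1 by (simp add: dvd_imp_le)
  hence "n * (Q - 1) \<le> d" unfolding j by simp
  thus ?thesis using d(2) by (simp add: Q_def)
qed

end



context mt
begin

lemma bound:
  assumes g: "irreducible g" "g dvd NN div DD"
  shows "n * (card (UNIV :: 'a set) ^ n - 1) \<le> degree g"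
proof -
  have "NN = (NN div DD) * DD" using N_eq by (simp only: mult.commute)
  hence "NN div DD dvd NN" by (rule dvdI)
  hence gN: "g dvd NN" using g(2) by (intro dvd_trans[OF g(2)])
  have g0: "g \<noteq> 0" using g(1) by auto
  have "\<not> is_unit g" using g(1) by (simp add: Factorial_Ring.irreducible_def)
  hence "degree g \<noteq> 0" using is_unit_iff_degree[OF g0] by simp
  then obtain z where gz: "ev g z = 0" using ev_root_exists[of g] by auto
  have Nz: "ev NN z = 0" by (rule ev_dvd[OF gN gz])
  show ?thesis
  proof (cases "z ^ (card (UNIV :: 'a set) ^ n) = z")
    case True
    from caseA[OF Nz True g(1) gz g(2)] show ?thesis ..
  next
    case False
    show ?thesis by (rule caseB[OF Nz False g(1) gz])
  qed
qed

lemma irr_F: "irreducible (NN div DD)"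
proof (rule Factorial_Ring.irreducibleI)
  define F where "F = NN div DD"
  have degF: "degree F = n * (card (UNIV :: 'a set) ^ n - 1)" using deg_F by (simp add: F_def)
  have dpos: "degree F > 0" using degF n1 Qpos by simp
  have F0: "F \<noteq> 0" using dpos by auto
  thus "NN div DD \<noteq> 0" by (simp add: F_def)
  have "\<not> is_unit F" using dpos is_unit_iff_degree[OF F0] by simp
  thus "\<not> is_unit (NN div DD)" by (simp add: F_def)
  fix a b assume ab: "NN div DD = a * b"
  show "is_unit a \<or> is_unit b"
  proof (rule ccontr)
    assume nu: "\<not> (is_unit a \<or> is_unit b)"
    have a0: "a \<noteq> 0" and b0: "b \<noteq> 0" using ab dpos by (auto simp: F_def)
    have "degree b \<noteq> 0" using nu is_unit_iff_degree[OF b0] by simp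
    hence lt: "degree a < degree F" using ab a0 b0 by (simp add: F_def degree_mult_eq)
    have "a dvd F" using ab by (simp add: F_def)
    from small_irr_factor[OF this a0] nu obtain g where
      gg: "irreducible g" "g dvd F" "degree g \<le> degree a" by blast
    have "n * (card (UNIV :: 'a set) ^ n - 1) \<le> degree g" by (rule bound) (use gg in \<open>simp_all add: F_def\<close>)
    thus False using gg(3) lt degF by simp
  qed
qed

end

theorem mainTheorem10:
  fixes f :: "'a::{field,finite} poly" and \<beta> \<gamma> :: 'a and n :: nat
  assumes "n \<ge> 1" and "card (UNIV :: 'a set) ^ n > 2"
    and "\<beta> \<noteq> - \<gamma>"
    and "primitive_poly n f" and "f \<noteq> [:-1, 1:]"
  shows "den_poly n \<beta> \<gamma> f dvd hom_num n \<beta> \<gamma> f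
       \<and> irreducible (hom_num n \<beta> \<gamma> f div den_poly n \<beta> \<gamma> f)
       \<and> degree (hom_num n \<beta> \<gamma> f div den_poly n \<beta> \<gamma> f) = n * (card (UNIV :: 'a set) ^ n - 1)"
proof -
  interpret mt f \<beta> \<gamma> n by unfold_locales (use assms in auto)
  show ?thesis using D_dvd_N irr_F deg_F by blast
qed



end
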